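(* Let $0\le\alpha<\beta$ with $\alpha+\beta<2$, and set $c_1=\alpha+\beta$, $c_2=\beta-\alpha$. Define $\tilde\Phi:\mathbb{R}^2\to\mathbb{R}$ by \[ \tilde\Phi(x,y)=\tfrac14c_1x^2+\tfrac14c_2y^2-\tfrac12\log\cosh\!\Big(\tfrac{c_1x+c_2y}{2}\Big)-\tfrac12\log\cosh\!\Big(\tfrac{c_1x-c_2y}{2}\Big). \] Then $(0,0)$ is the unique critical point of $\tilde\Phi$, and for every $r>0$, $\inf_{(x,y)\notin B(0,r)}\tilde\Phi(x,y)>0$, where $B(0,r)$ is the open Euclidean ball of radius $r$ about the origin. *)

theory Defs
  imports "HOL-Analysis.Analysis"
begin

text \<open>The function Phi-tilde on R^2 (modelled as real \<times> real, whose norm is Euclidean),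
  with c1 = alpha + beta and c2 = beta - alpha.\<close>
definition Phi_tilde :: "real \<Rightarrow> real \<Rightarrow> real \<times> real \<Rightarrow> real" where
  "Phi_tilde \<alpha> \<beta> = (\<lambda>(x, y).
     let c1 = \<alpha> + \<beta>; c2 = \<beta> - \<alpha> in
       1/4 * c1 * x\<^sup>2 + 1/4 * c2 * y\<^sup>2
       - 1/2 * ln (cosh ((c1 * x + c2 * y) / 2))
       - 1/2 * ln (cosh ((c1 * x - c2 * y) / 2)))"

definition critical_point :: "('a::real_normed_vector \<Rightarrow> real) \<Rightarrow> 'a \<Rightarrow> bool" where
  "critical_point f p \<longleftrightarrow> (f has_derivative (\<lambda>h. 0)) (at p)"

end

theory Submission
  imports Defs
begin

lemma tanh_le_self: assumes "(0::real) \<le> z" shows "tanh z \<le> z"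
proof -
  have "(\<lambda>w. w - tanh w) 0 \<le> (\<lambda>w. w - tanh w) z"
    apply (rule DERIV_nonneg_imp_nondecreasing[OF assms])
    apply (rule exI[where x="tanh _ ^ 2"])
    apply (auto intro!: derivative_eq_intros)
    done
  thus ?thesis by simp
qed

lemma abs_tanh_le: "\<bar>tanh (z::real)\<bar> \<le> \<bar>z\<bar>"
  using tanh_le_self[of "\<bar>z\<bar>"] by (metis abs_ge_zero tanh_real_abs)

lemma L_deriv: "DERIV (\<lambda>z. ln (cosh z)) (z::real) :> tanh z"
  by (auto intro!: derivative_eq_intros simp: tanh_def)

lemma ln_cosh_le0: assumes "(0::real) \<le> z" shows "ln (cosh z) \<le> z\<^sup>2 / 2"
proof -
  have "(\<lambda>w. w\<^sup>2/2 - ln (cosh w)) 0 \<le> (\<lambda>w. w\<^sup>2/2 - ln (cosh w)) z"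
    apply (rule DERIV_nonneg_imp_nondecreasing[OF assms])
  proof -
    fix x :: real assume x: "0 \<le> x"
    have "DERIV (\<lambda>w. w\<^sup>2/2 - ln (cosh w)) x :> x - tanh x"
      by (auto intro!: derivative_eq_intros simp: tanh_def)
    moreover have "x - tanh x \<ge> 0" using tanh_le_self[OF x] by simp
    ultimately show "\<exists>y. DERIV (\<lambda>w. w\<^sup>2/2 - ln (cosh w)) x :> y \<and> 0 \<le> y" by blast
  qed
  thus ?thesis by simp
qed

lemma ln_cosh_le: "ln (cosh (z::real)) \<le> z\<^sup>2 / 2"
  using ln_cosh_le0[of "\<bar>z\<bar>"] by simp

definition L :: "real \<Rightarrow> real" where "L z = ln (cosh z)"

lemma L_deriv': "DERIV L z :> tanh z" unfolding L_def[abs_def] by (rule L_deriv)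

lemmas L_chain = L_deriv'[THEN DERIV_compose_FDERIV]

lemma Phi_eq: "Phi_tilde \<alpha> \<beta> = (\<lambda>p. 1/4 * (\<alpha>+\<beta>) * (fst p)\<^sup>2 + 1/4 * (\<beta>-\<alpha>) * (snd p)\<^sup>2
       - 1/2 * L (((\<alpha>+\<beta>) * fst p + (\<beta>-\<alpha>) * snd p) / 2)
       - 1/2 * L (((\<alpha>+\<beta>) * fst p - (\<beta>-\<alpha>) * snd p) / 2))"
  by (auto simp: Phi_tilde_def fun_eq_iff Let_def L_def)

definition DP where "DP \<alpha> \<beta> p = (\<lambda>h::real\<times>real.
   (\<alpha>+\<beta>)/2 * fst p * fst h + (\<beta>-\<alpha>)/2 * snd p * snd h
   - 1/2 * (((\<alpha>+\<beta>) * fst h + (\<beta>-\<alpha>) * snd h) / 2 * tanh (((\<alpha>+\<beta>) * fst p + (\<beta>-\<alpha>) * snd p) / 2))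
   - 1/2 * (((\<alpha>+\<beta>) * fst h - (\<beta>-\<alpha>) * snd h) / 2 * tanh (((\<alpha>+\<beta>) * fst p - (\<beta>-\<alpha>) * snd p) / 2)))"

lemma Phi_deriv: "(Phi_tilde \<alpha> \<beta> has_derivative DP \<alpha> \<beta> p) (at p)"
  unfolding Phi_eq DP_def
  apply (rule has_derivative_eq_rhs)
   apply (auto intro!: derivative_eq_intros L_chain)
  apply (rule ext)
  apply (simp add: power2_eq_square divide_simps)
  apply algebra
  done

lemma crit_zero:
  fixes \<alpha> \<beta> :: real
  assumes "0 \<le> \<alpha>" and "\<alpha> < \<beta>" and "\<alpha> + \<beta> < 2"
    and "critical_point (Phi_tilde \<alpha> \<beta>) p"
  shows "p = (0,0)"
proof -
  obtain x y where p: "p = (x,y)" by (cases p)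
  have "DP \<alpha> \<beta> p = (\<lambda>h. 0)"
    using has_derivative_unique[OF Phi_deriv assms(4)[unfolded critical_point_def]] .
  hence e1: "DP \<alpha> \<beta> p (1,0) = 0" and e2: "DP \<alpha> \<beta> p (0,1) = 0" by auto
  define A where "A = tanh (((\<alpha>+\<beta>) * x + (\<beta>-\<alpha>) * y) / 2)"
  define B where "B = tanh (((\<alpha>+\<beta>) * x - (\<beta>-\<alpha>) * y) / 2)"
  have d1: "DP \<alpha> \<beta> p (1,0) = (\<alpha>+\<beta>)/2*x - 1/2*((\<alpha>+\<beta>)/2*A) - 1/2*((\<alpha>+\<beta>)/2*B)"
    by (simp add: DP_def p A_def B_def)
  have "(\<alpha>+\<beta>) * (2*x - A - B) = 0" using e1 unfolding d1
    by (simp add: algebra_simps) (simp add: field_simps)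
  hence hA: "2*x = A + B" using assms by simp
  have d2: "DP \<alpha> \<beta> p (0,1) = (\<beta>-\<alpha>)/2*y - 1/2*((\<beta>-\<alpha>)/2*A) - 1/2*(-(\<beta>-\<alpha>)/2*B)"
    by (simp add: DP_def p A_def B_def)
  have "(\<beta>-\<alpha>) * (2*y - A + B) = 0" using e2 unfolding d2
    by (simp add: algebra_simps) (simp add: field_simps)
  hence hB: "2*y = A - B" using assms by simp
  have sA: "x + y = A" and tB: "x - y = B" using hA hB by auto
  have u: "((\<alpha>+\<beta>) * x + (\<beta>-\<alpha>) * y) = \<beta> * (x+y) + \<alpha> * (x-y)" by algebra
  have v: "((\<alpha>+\<beta>) * x - (\<beta>-\<alpha>) * y) = \<alpha> * (x+y) + \<beta> * (x-y)" by algebra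
  have tri1: "\<bar>\<beta> * (x+y) + \<alpha> * (x-y)\<bar> \<le> \<beta> * \<bar>x+y\<bar> + \<alpha> * \<bar>x-y\<bar>"
    using assms abs_triangle_ineq[of "\<beta> * (x+y)" "\<alpha> * (x-y)"] by (simp add: abs_mult)
  have tri2: "\<bar>\<alpha> * (x+y) + \<beta> * (x-y)\<bar> \<le> \<alpha> * \<bar>x+y\<bar> + \<beta> * \<bar>x-y\<bar>"
    using assms abs_triangle_ineq[of "\<alpha> * (x+y)" "\<beta> * (x-y)"] by (simp add: abs_mult)
  have a1: "\<bar>x+y\<bar> \<le> (\<beta> * \<bar>x+y\<bar> + \<alpha> * \<bar>x-y\<bar>)/2"
    using abs_tanh_le[of "(\<beta> * (x+y) + \<alpha> * (x-y))/2"] tri1 sA unfolding A_def u by simp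
  have a2: "\<bar>x-y\<bar> \<le> (\<alpha> * \<bar>x+y\<bar> + \<beta> * \<bar>x-y\<bar>)/2"
    using abs_tanh_le[of "(\<alpha> * (x+y) + \<beta> * (x-y))/2"] tri2 tB unfolding B_def v by simp
  have "\<bar>x+y\<bar> + \<bar>x-y\<bar> \<le> (\<alpha>+\<beta>)/2 * (\<bar>x+y\<bar> + \<bar>x-y\<bar>)"
    using a1 a2 by (simp add: algebra_simps add_divide_distrib)
  moreover have "(\<alpha>+\<beta>)/2 < 1" using assms by simp
  ultimately have "\<bar>x+y\<bar> + \<bar>x-y\<bar> \<le> 0"
    by (smt (verit) mult_le_cancel_right1 abs_ge_zero)
  thus ?thesis using p by auto
qed

lemma crit_at_zero: "critical_point (Phi_tilde \<alpha> \<beta>) (0,0)"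
proof -
  have "DP \<alpha> \<beta> (0,0) = (\<lambda>h. 0)" by (simp add: DP_def fun_eq_iff)
  thus ?thesis using Phi_deriv[of \<alpha> \<beta> "(0,0)"] unfolding critical_point_def by simp
qed

lemma Phi_lower:
  fixes \<alpha> \<beta> :: real
  shows "Phi_tilde \<alpha> \<beta> (x,y) \<ge> (\<alpha>+\<beta>)*(2-(\<alpha>+\<beta>))/8 * x\<^sup>2 + (\<beta>-\<alpha>)*(2-(\<beta>-\<alpha>))/8 * y\<^sup>2"
proof -
  define u where "u = ((\<alpha>+\<beta>) * x + (\<beta>-\<alpha>) * y) / 2"
  define v where "v = ((\<alpha>+\<beta>) * x - (\<beta>-\<alpha>) * y) / 2"
  have "Phi_tilde \<alpha> \<beta> (x,y) = 1/4 * (\<alpha>+\<beta>) * x\<^sup>2 + 1/4 * (\<beta>-\<alpha>) * y\<^sup>2 - 1/2 * ln (cosh u) - 1/2 * ln (cosh v)"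
    by (simp add: Phi_tilde_def u_def v_def Let_def)
  also have "\<dots> \<ge> 1/4 * (\<alpha>+\<beta>) * x\<^sup>2 + 1/4 * (\<beta>-\<alpha>) * y\<^sup>2 - u\<^sup>2/4 - v\<^sup>2/4"
    using ln_cosh_le[of u] ln_cosh_le[of v] by simp
  also have "1/4 * (\<alpha>+\<beta>) * x\<^sup>2 + 1/4 * (\<beta>-\<alpha>) * y\<^sup>2 - u\<^sup>2/4 - v\<^sup>2/4
     = (\<alpha>+\<beta>)*(2-(\<alpha>+\<beta>))/8 * x\<^sup>2 + (\<beta>-\<alpha>)*(2-(\<beta>-\<alpha>))/8 * y\<^sup>2"
    unfolding u_def v_def by (simp add: power2_eq_square field_simps)
  finally show ?thesis .
qed

theorem mainTheorem6:
  fixes \<alpha> \<beta> :: real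
  assumes "0 \<le> \<alpha>" and "\<alpha> < \<beta>" and "\<alpha> + \<beta> < 2"
  shows "{p. critical_point (Phi_tilde \<alpha> \<beta>) p} = {(0, 0)} \<and>
    (\<forall>r>0. (INF p \<in> - ball (0::real \<times> real) r. Phi_tilde \<alpha> \<beta> p) > 0)"
proof
  show "{p. critical_point (Phi_tilde \<alpha> \<beta>) p} = {(0, 0)}"
    using crit_zero[OF assms] crit_at_zero by blast
  show "\<forall>r>0. (INF p \<in> - ball (0::real \<times> real) r. Phi_tilde \<alpha> \<beta> p) > 0"
  proof (intro allI impI)
    fix r :: real assume r: "r > 0"
    define m where "m = min ((\<alpha>+\<beta>)*(2-(\<alpha>+\<beta>))/8) ((\<beta>-\<alpha>)*(2-(\<beta>-\<alpha>))/8)"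
    have m: "m > 0" unfolding m_def using assms by (simp add: mult_pos_pos)
    have "m * r\<^sup>2 \<le> (INF p \<in> - ball (0::real \<times> real) r. Phi_tilde \<alpha> \<beta> p)"
    proof (rule cINF_greatest)
      show "- ball (0::real \<times> real) r \<noteq> {}"
        by (metis ComplI centre_in_ball empty_iff linorder_not_le mem_ball_0 norm_zero r emptyE
                  ball_eq_empty Compl_eq_Diff_UNIV Diff_empty subset_empty UNIV_not_empty
                  ball_subset_cball  bounded_ball not_bounded_UNIV bounded_subset subset_iff)
    next
      fix p :: "real \<times> real" assume "p \<in> - ball 0 r"
      hence np: "norm p \<ge> r" by (simp add: dist_norm)
      obtain x y where p: "p = (x,y)" by (cases p)
      have "r\<^sup>2 \<le> x\<^sup>2 + y\<^sup>2"
      proof -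
        have "r \<le> sqrt (x\<^sup>2 + y\<^sup>2)" using np p by (simp add: norm_Pair)
        hence "r\<^sup>2 \<le> (sqrt (x\<^sup>2 + y\<^sup>2))\<^sup>2" using r by (intro power_mono) auto
        thus ?thesis by simp
      qed
      hence "m * r\<^sup>2 \<le> m * (x\<^sup>2 + y\<^sup>2)" using m by simp
      also have "\<dots> \<le> (\<alpha>+\<beta>)*(2-(\<alpha>+\<beta>))/8 * x\<^sup>2 + (\<beta>-\<alpha>)*(2-(\<beta>-\<alpha>))/8 * y\<^sup>2"
        unfolding m_def distrib_left
        by (intro add_mono mult_right_mono) auto
      also have "\<dots> \<le> Phi_tilde \<alpha> \<beta> p" using Phi_lower p by simp
      finally show "m * r\<^sup>2 \<le> Phi_tilde \<alpha> \<beta> p" .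
    qed
    moreover have "m * r\<^sup>2 > 0" using m r by simp
    ultimately show "(INF p \<in> - ball (0::real \<times> real) r. Phi_tilde \<alpha> \<beta> p) > 0" by linarith
  qed
qed

end
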